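(* Let $t\ge1$ and $n=t+1$. The gadget $\mathtt{SecBackSub}$ defined below is $t$-NIo secure with public output $\mathbf{x}$. $\mathtt{SecBackSub}$ takes as input a Boolean sharing $(\mathbf{A}_i)$ of a matrix $\mathbf{A}\in\mathbb{F}_q^{m\times m}$ and a Boolean sharing $(\mathbf{b}_i)$ of $\mathbf{b}\in\mathbb{F}_q^m$ and computes: for $j=m$ down to $2$: $\mathbf{x}[j]:=\mathtt{FullAdd}((\mathbf{b}[j]_i))$; for $k=1,\dots,j-1$: $\mathbf{b}[k]_i:=\mathbf{b}[k]_i+\mathbf{x}[j]\cdot\mathbf{A}[k,j]_i$ for every $i$. Then $\mathbf{x}[1]:=\mathtt{FullAdd}((\mathbf{b}[1]_i))$, and it returns the public vector $\mathbf{x}\in\mathbb{F}_q^m$.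
   Context: A Boolean sharing of $x\in\mathbb{F}_q$ is $(x_1,\dots,x_n)$ with $x=x_1+\cdots+x_n$; vectors and matrices are shared entry-wise; $\mathbf{v}[j]$ and $\mathbf{A}[k,j]$ denote entries. $\mathtt{StrongRefresh}((x_i))$: set $y_i:=x_i$; for $1\le i<j\le n$: sample $r$ uniformly from $\mathbb{F}_q$, set $y_i:=y_i+r$, $y_j:=y_j-r$; return $(y_i)$ (this gadget is free-$t$-SNI). $\mathtt{FullAdd}((y_i))$: $(a_i):=\mathtt{StrongRefresh}((y_i))$ and return $a_1+\cdots+a_n$. Probing model: an adversary may place probes on intermediate values (internal wires) of a gadget. A gadget with public output $b$ and some input sharings is $t$-NIo (non-interference with public outputs) secure if any set of at most $t_1\le t$ probes on its internal wires can be perfectly simulated using $t_1$ shares of each of its input sharings together with the value $b$. *)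

theory Defs
  imports "HOL-Probability.Probability"
begin

text \<open>Conventions (0-based): shares are indexed by i < n, matrix/vector entries by
  k, j < m.  A sharing of the matrix is A :: share => row => col => value,
  a sharing of the vector is b :: share => entry => value.
  The loop "for j = m down to 2 ... then x[1]" becomes the loop over columns
  j = m-1 down to 0 (for column 0 there are no updates, since k < j).\<close>

definition pairs :: "nat \<Rightarrow> (nat \<times> nat) list" where
  "pairs n = concat (map (\<lambda>i. map (\<lambda>i'. (i, i')) [Suc i..<n]) [0..<n])"

definition npairs :: "nat \<Rightarrow> nat" where
  "npairs n = length (pairs n)"

text \<open>State (y_i)_i of StrongRefresh after s loop steps, with randomness r s used at step s.\<close>
primrec rstate :: "(nat \<times> nat) list \<Rightarrow> (nat \<Rightarrow> 'a::ab_group_add) \<Rightarrow> (nat \<Rightarrow> 'a) \<Rightarrow> nat \<Rightarrow> nat \<Rightarrow> 'a" where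
  "rstate ps y r 0 = y"
| "rstate ps y r (Suc s) =
     (let ii = ps ! s; z = rstate ps y r s
      in z(fst ii := z (fst ii) + r s, snd ii := z (snd ii) - r s))"

definition fulladd :: "nat \<Rightarrow> (nat \<Rightarrow> 'a::ab_group_add) \<Rightarrow> (nat \<Rightarrow> 'a) \<Rightarrow> 'a" where
  "fulladd n y r = (\<Sum>i<n. rstate (pairs n) y r (npairs n) i)"

text \<open>Randomness: r (j,s) is the random value of step s of the StrongRefresh inside the
  FullAdd call for column j.  bst m n A b r st is the state of the b-shares after st
  iterations of the outer loop (iteration st processes column j = m-1-st).\<close>
primrec bst :: "nat \<Rightarrow> nat \<Rightarrow> (nat \<Rightarrow> nat \<Rightarrow> nat \<Rightarrow> 'a::field) \<Rightarrow> (nat \<Rightarrow> nat \<Rightarrow> 'a)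
                 \<Rightarrow> (nat \<times> nat \<Rightarrow> 'a) \<Rightarrow> nat \<Rightarrow> (nat \<Rightarrow> nat \<Rightarrow> 'a)" where
  "bst m n A b r 0 = b"
| "bst m n A b r (Suc st) =
     (let j = m - 1 - st; B = bst m n A b r st;
          xj = fulladd n (\<lambda>i. B i j) (\<lambda>s. r (j, s))
      in (\<lambda>i k. if k < j then B i k + xj * A i k j else B i k))"

definition bin :: "nat \<Rightarrow> nat \<Rightarrow> (nat \<Rightarrow> nat \<Rightarrow> nat \<Rightarrow> 'a::field) \<Rightarrow> (nat \<Rightarrow> nat \<Rightarrow> 'a)
                   \<Rightarrow> (nat \<times> nat \<Rightarrow> 'a) \<Rightarrow> nat \<Rightarrow> (nat \<Rightarrow> nat \<Rightarrow> 'a)" where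
  "bin m n A b r j = bst m n A b r (m - 1 - j)"

definition ystate :: "nat \<Rightarrow> nat \<Rightarrow> (nat \<Rightarrow> nat \<Rightarrow> nat \<Rightarrow> 'a::field) \<Rightarrow> (nat \<Rightarrow> nat \<Rightarrow> 'a)
                   \<Rightarrow> (nat \<times> nat \<Rightarrow> 'a) \<Rightarrow> nat \<Rightarrow> nat \<Rightarrow> nat \<Rightarrow> 'a" where
  "ystate m n A b r j s = rstate (pairs n) (\<lambda>i. bin m n A b r j i j) (\<lambda>s. r (j, s)) s"

definition xcol :: "nat \<Rightarrow> nat \<Rightarrow> (nat \<Rightarrow> nat \<Rightarrow> nat \<Rightarrow> 'a::field) \<Rightarrow> (nat \<Rightarrow> nat \<Rightarrow> 'a)
                   \<Rightarrow> (nat \<times> nat \<Rightarrow> 'a) \<Rightarrow> nat \<Rightarrow> 'a" where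
  "xcol m n A b r j = fulladd n (\<lambda>i. bin m n A b r j i j) (\<lambda>s. r (j, s))"

definition sbs_out :: "nat \<Rightarrow> nat \<Rightarrow> (nat \<Rightarrow> nat \<Rightarrow> nat \<Rightarrow> 'a::field) \<Rightarrow> (nat \<Rightarrow> nat \<Rightarrow> 'a)
                   \<Rightarrow> (nat \<times> nat \<Rightarrow> 'a) \<Rightarrow> 'a list" where
  "sbs_out m n A b r = map (xcol m n A b r) [0..<m]"

datatype wire =
    WA nat nat nat   \<comment> \<open>WA i k j: input share A[k,j]_i\<close>
  | WB nat nat nat   \<comment> \<open>WB j i k: b[k]_i at the start of the iteration for column j
                        (WB (m-1) is the input sharing of b; every updated b[k]_i appears)\<close>
  | WR nat nat       \<comment> \<open>WR j s: random r sampled in step s of StrongRefresh of column j\<close>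
  | WY nat nat nat   \<comment> \<open>WY j s i: y_i after s steps of StrongRefresh of column j
                        (s = 0: b[j]_i; s = npairs n: the refreshed share a_i)\<close>
  | WS nat nat       \<comment> \<open>WS j k: partial sum a_0 + ... + a_(k-1) in FullAdd of column j
                        (k = n gives x[j])\<close>
  | WP nat nat nat   \<comment> \<open>WP j k i: product x[j] * A[k,j]_i\<close>

fun wval :: "nat \<Rightarrow> nat \<Rightarrow> (nat \<Rightarrow> nat \<Rightarrow> nat \<Rightarrow> 'a::field) \<Rightarrow> (nat \<Rightarrow> nat \<Rightarrow> 'a)
               \<Rightarrow> (nat \<times> nat \<Rightarrow> 'a) \<Rightarrow> wire \<Rightarrow> 'a" where
  "wval m n A b r (WA i k j) = A i k j"
| "wval m n A b r (WB j i k) = bin m n A b r j i k"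
| "wval m n A b r (WR j s) = r (j, s)"
| "wval m n A b r (WY j s i) = ystate m n A b r j s i"
| "wval m n A b r (WS j k) = (\<Sum>i<k. ystate m n A b r j (npairs n) i)"
| "wval m n A b r (WP j k i) = xcol m n A b r j * A i k j"

definition wires :: "nat \<Rightarrow> nat \<Rightarrow> wire set" where
  "wires m n =
     {WA i k j | i k j. i < n \<and> k < m \<and> j < m}
   \<union> {WB j i k | j i k. j < m \<and> i < n \<and> k < m}
   \<union> {WR j s | j s. j < m \<and> s < npairs n}
   \<union> {WY j s i | j s i. j < m \<and> s \<le> npairs n \<and> i < n}
   \<union> {WS j k | j k. j < m \<and> 1 \<le> k \<and> k \<le> n}
   \<union> {WP j k i | j k i. j < m \<and> k < j \<and> i < n}"

definition rand_dom :: "nat \<Rightarrow> nat \<Rightarrow> (nat \<times> nat) set" where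
  "rand_dom m n = {(j, s). j < m \<and> s < npairs n}"

definition rand :: "nat \<Rightarrow> nat \<Rightarrow> (nat \<times> nat \<Rightarrow> 'a::finite) pmf" where
  "rand m n = pmf_of_set (PiE (rand_dom m n) (\<lambda>_. UNIV))"

definition restrA :: "nat \<Rightarrow> nat set \<Rightarrow> (nat \<Rightarrow> nat \<Rightarrow> nat \<Rightarrow> 'a::zero) \<Rightarrow> (nat \<Rightarrow> nat \<Rightarrow> nat \<Rightarrow> 'a)" where
  "restrA m I A = (\<lambda>i k j. if i \<in> I \<and> k < m \<and> j < m then A i k j else 0)"

definition restrB :: "nat \<Rightarrow> nat set \<Rightarrow> (nat \<Rightarrow> nat \<Rightarrow> 'a::zero) \<Rightarrow> (nat \<Rightarrow> nat \<Rightarrow> 'a)" where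
  "restrB m I b = (\<lambda>i k. if i \<in> I \<and> k < m then b i k else 0)"

text \<open>The joint distribution of
  (probed wire values, public output) must equal: draw the output, then run a simulator that
  only sees t1 = card P shares of each input sharing and the output.  (Since the output is
  deterministic, this is the usual "simulate using t1 shares and the value of x".)\<close>
definition SecBackSub_NIo :: "'a::{finite,field} itself \<Rightarrow> nat \<Rightarrow> nat \<Rightarrow> nat \<Rightarrow> bool" where
  "SecBackSub_NIo _ m n t \<longleftrightarrow>
    (\<forall>P. P \<subseteq> wires m n \<and> card P \<le> t \<longrightarrow>
      (\<exists>IA IB (sim :: (nat \<Rightarrow> nat \<Rightarrow> nat \<Rightarrow> 'a) \<Rightarrow> (nat \<Rightarrow> nat \<Rightarrow> 'a) \<Rightarrow> 'a list \<Rightarrow> (wire \<Rightarrow> 'a) pmf).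
         IA \<subseteq> {..<n} \<and> IB \<subseteq> {..<n} \<and> card IA \<le> card P \<and> card IB \<le> card P \<and>
         (\<forall>(A :: nat \<Rightarrow> nat \<Rightarrow> nat \<Rightarrow> 'a) (b :: nat \<Rightarrow> nat \<Rightarrow> 'a).
            map_pmf (\<lambda>r. (restrict (wval m n A b r) P, sbs_out m n A b r)) (rand m n)
          = bind_pmf (map_pmf (sbs_out m n A b) (rand m n))
              (\<lambda>x. map_pmf (\<lambda>v. (v, x)) (sim (restrA m IA A) (restrB m IB b) x)))))"

end

theory Submission
  imports Defs
begin

definition ccf :: "nat \<Rightarrow> nat \<Rightarrow> (nat \<Rightarrow> 'a::ab_group_add) \<Rightarrow> nat \<Rightarrow> 'a" where
  "ccf n h d s = (case pairs n ! s of (a, a') \<Rightarrow> if a' = h then - d a else if a = h then d a' else 0)"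

fun ix :: "nat \<Rightarrow> wire \<Rightarrow> nat" where
  "ix n (WA i k j) = i" | "ix n (WB j i k) = i" | "ix n (WR j s) = fst (pairs n ! s)"
| "ix n (WY j s i) = i" | "ix n (WS j k) = 0" | "ix n (WP j k i) = i"

lemma set_pairs: "set (pairs n) = {(a,a'). a < a' \<and> a' < n}"
  unfolding pairs_def by (auto simp: image_iff)

lemma distinct_pairs: "distinct (pairs n)"
  unfolding pairs_def
proof (rule distinct_concat)
  show "distinct (map (\<lambda>i. map (Pair i) [Suc i..<n]) [0..<n])"
  proof (subst distinct_map, intro conjI)
    show "inj_on (\<lambda>i. map (Pair i) [Suc i..<n]) (set [0..<n])"
    proof (rule inj_onI)
      fix i i' assume i: "i \<in> set [0..<n]" "i' \<in> set [0..<n]"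
        and e: "map (Pair i) [Suc i..<n] = map (Pair i') [Suc i'..<n]"
      show "i = i'"
      proof (cases "Suc i < n")
        case True
        then have "hd (map (Pair i) [Suc i..<n]) = (i, Suc i)" by (simp add: upt_conv_Cons)
        moreover have "map (Pair i') [Suc i'..<n] \<noteq> []" using e True by auto
        ultimately have h1: "hd (map (Pair i') [Suc i'..<n]) = (i, Suc i)" "Suc i' < n" using e by auto
        then have "hd (map (Pair i') [Suc i'..<n]) = (i', Suc i')" by (simp add: upt_conv_Cons)
        with h1 show ?thesis by simp
      next
        case False
        then have "map (Pair i') [Suc i'..<n] = []" using e by simp
        then show ?thesis using False i by auto
      qed
    qed
  qed simp
qed (auto simp: distinct_map inj_on_def)

lemma pairs_nth: "s < npairs n \<Longrightarrow> fst (pairs n ! s) < snd (pairs n ! s) \<and> snd (pairs n ! s) < n"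
  using nth_mem[of s "pairs n"] set_pairs[of n] unfolding npairs_def by auto

lemma rstate_sum:
  assumes "\<forall>s'<s. fst (ps!s') < n \<and> snd (ps!s') < n \<and> fst (ps!s') \<noteq> snd (ps!s')"
  shows "(\<Sum>i<n. rstate ps y r s i) = (\<Sum>i<n. y i)"
  using assms
proof (induction s)
  case (Suc s)
  obtain a a' where p: "ps ! s = (a,a')" by (cases "ps!s")
  with Suc.prems have aa: "a < n" "a' < n" "a \<noteq> a'" by (metis fst_conv snd_conv lessI)+
  have "(\<Sum>i<n. rstate ps y r (Suc s) i) = (\<Sum>i<n. rstate ps y r s i + (if i = a then r s else 0) - (if i = a' then r s else 0))"
    by (intro sum.cong) (auto simp: p Let_def aa)
  also have "\<dots> = (\<Sum>i<n. rstate ps y r s i)"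
    by (simp add: sum.distrib sum_subtractf aa)
  finally show ?case using Suc by simp
qed simp

lemma fulladd_sum: "fulladd n y r = (\<Sum>i<n. y i)"
  unfolding fulladd_def
  by (rule rstate_sum) (use pairs_nth in fastforce)

lemma rstate_lin: "rstate ps (\<lambda>i. y i + y' i) (\<lambda>s. r s + r' s) s = (\<lambda>i. rstate ps y r s i + rstate ps y' r' s i)"
  by (induction s) (auto simp: Let_def fun_eq_iff algebra_simps)

lemma rstate_cong: "(\<forall>s'<s. r s' = r' s') \<Longrightarrow> rstate ps y r s = rstate ps y r' s"
  by (induction s) (auto simp: Let_def)

lemma hub1: "d i = 0 \<Longrightarrow> i \<noteq> h \<Longrightarrow> rstate (pairs n) d (ccf n h d) s i = 0"
  by (induction s) (auto simp: Let_def ccf_def split: prod.split)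

lemma rstate_formula:
  "(\<forall>s'<s. fst (ps!s') \<noteq> snd (ps!s')) \<Longrightarrow> rstate ps y r s i =
     y i + (\<Sum>s'<s. (if fst (ps!s') = i then r s' else 0) - (if snd (ps!s') = i then r s' else 0))"
proof (induction s)
  case (Suc s)
  obtain a a' where p: "ps ! s = (a,a')" by (cases "ps!s")
  with Suc.prems have "a \<noteq> a'" by (metis fst_conv snd_conv lessI)
  then show ?case using Suc by (auto simp: p Let_def)
qed simp


lemma hub2:
  fixes d :: "nat \<Rightarrow> 'a::ab_group_add"
  assumes h: "h < n" and i: "i < n" and S: "(\<Sum>i<n. d i) = 0"
  shows "rstate (pairs n) d (ccf n h d) (npairs n) i = 0"
proof -
  have ne: "\<forall>s'<npairs n. fst (pairs n ! s') \<noteq> snd (pairs n ! s')"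
    using pairs_nth by (metis less_irrefl)
  have other: "rstate (pairs n) d (ccf n h d) (npairs n) i' = 0" if i': "i' < n" "i' \<noteq> h" for i'
  proof -
    define f where "f p = (if fst p = i' then (case p of (a, a') \<Rightarrow> if a' = h then - d a else if a = h then d a' else 0) else 0)
        - (if snd p = i' then (case p of (a, a') \<Rightarrow> if a' = h then - d a else if a = h then d a' else 0) else 0)" for p
    have f2: "f p = (if p = (i',h) then - d i' else 0) + (if p = (h,i') then - d i' else 0)" for p
      using i' by (cases p) (auto simp: f_def)
    have "rstate (pairs n) d (ccf n h d) (npairs n) i' = d i' + (\<Sum>s'<length (pairs n). f (pairs n ! s'))"
      by (subst rstate_formula) (use ne in \<open>auto simp: npairs_def f_def ccf_def intro!: sum.cong split: prod.split\<close>)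
    also have "(\<Sum>s'<length (pairs n). f (pairs n ! s')) = sum_list (map f (pairs n))"
      by (simp add: sum_list_sum_nth atLeast0LessThan)
    also have "\<dots> = sum f (set (pairs n))"
      by (simp add: sum_list_distinct_conv_sum_set distinct_pairs)
    also have "\<dots> = - d i'"
      unfolding f2 sum.distrib sum.delta[OF finite_set] using i' h by (auto simp: set_pairs)
    finally show ?thesis by simp
  qed
  show ?thesis
  proof (cases "i = h")
    case False thus ?thesis using other i by simp
  next
    case True
    have "(\<Sum>i<n. rstate (pairs n) d (ccf n h d) (npairs n) i) = 0"
      using rstate_sum[of "npairs n" "pairs n" n d "ccf n h d"] pairs_nth S by fastforce
    moreover have "(\<Sum>i<n. rstate (pairs n) d (ccf n h d) (npairs n) i)
       = (\<Sum>i<n. if i = h then rstate (pairs n) d (ccf n h d) (npairs n) h else 0)"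
      by (intro sum.cong) (auto simp: other)
    ultimately show ?thesis using True h by simp
  qed
qed

lemma bst_indep: "bst m n A b r st = bst m n A b r' st"
  by (induction st) (simp_all add: Let_def fulladd_sum)

lemma bin_indep: "bin m n A b r j = bin m n A b r' j"
  unfolding bin_def by (rule bst_indep)

lemma xcol_sum: "xcol m n A b r j = (\<Sum>i<n. bin m n A b r j i j)"
  unfolding xcol_def by (simp add: fulladd_sum)

lemma xcol_indep: "xcol m n A b r j = xcol m n A b r' j"
  unfolding xcol_sum by (simp add: bin_indep[of m n A b r j r'])

lemma sbs_out_indep: "sbs_out m n A b r = sbs_out m n A b r'"
  unfolding sbs_out_def by (simp add: xcol_indep[of m n A b r _ r'])

lemma bst_share:
  assumes b: "\<forall>k<m. b i k = b0 i k" and A: "\<forall>k<m. \<forall>j<m. A i k j = A0 i k j"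
    and X: "\<forall>j<m. xcol m n A b r j = xcol m n A0 b0 r0 j"
  shows "st \<le> m \<Longrightarrow> k < m \<Longrightarrow> bst m n A b r st i k = bst m n A0 b0 r0 st i k"
proof (induction st arbitrary: k)
  case 0 thus ?case using b by simp
next
  case (Suc st)
  have e1: "fulladd n (\<lambda>i. bst m n A b r st i (m - Suc st)) (\<lambda>s. r (m - Suc st, s)) = xcol m n A b r (m - Suc st)"
    unfolding xcol_def bin_def using Suc.prems by (simp add: Suc_diff_Suc)
  have e2: "fulladd n (\<lambda>i. bst m n A0 b0 r0 st i (m - Suc st)) (\<lambda>s. r0 (m - Suc st, s)) = xcol m n A0 b0 r0 (m - Suc st)"
    unfolding xcol_def bin_def using Suc.prems by (simp add: Suc_diff_Suc)
  have j: "m - Suc st < m" using Suc.prems by simp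
  have xe: "xcol m n A b r (m - Suc st) = xcol m n A0 b0 r0 (m - Suc st)" using X j by blast
  have ih: "bst m n A b r st i k' = bst m n A0 b0 r0 st i k'" if "k' < m" for k'
    using Suc.IH[OF _ that] Suc.prems by simp
  have Ae: "A i k (m - Suc st) = A0 i k (m - Suc st)" using A j Suc.prems by blast
  show ?case
  proof -
    have fe: "fulladd n (\<lambda>i. bst m n A b r st i (m - Suc st)) (\<lambda>s. r (m - Suc st, s)) =
        fulladd n (\<lambda>i. bst m n A0 b0 r0 st i (m - Suc st)) (\<lambda>s. r0 (m - Suc st, s))"
      using e1 e2 xe by simp
    show ?thesis using ih[OF Suc.prems(2)] Ae fe by (simp add: Let_def)
  qed
qed


lemma finite_rand_dom: "finite (rand_dom m n)"
  by (rule finite_subset[of _ "{..<m} \<times> {..<npairs n}"]) (auto simp: rand_dom_def)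

lemma shift_rand:
  fixes c :: "nat \<times> nat \<Rightarrow> 'a::{finite, ab_group_add}"
  assumes "\<forall>p. p \<notin> rand_dom m n \<longrightarrow> c p = 0"
  shows "map_pmf (\<lambda>r p. r p + c p) (rand m n) = rand m n"
proof -
  let ?S = "PiE (rand_dom m n) (\<lambda>_. UNIV :: 'a set)"
  let ?f = "\<lambda>(r :: nat \<times> nat \<Rightarrow> 'a) p. r p + c p"
  have fin: "finite ?S" by (simp add: finite_PiE finite_rand_dom)
  have ne: "?S \<noteq> {}" by (simp add: PiE_eq_empty_iff)
  have inj: "inj_on ?f ?S" by (auto simp: inj_on_def fun_eq_iff)
  have img: "?f ` ?S = ?S"
  proof
    show "?f ` ?S \<subseteq> ?S" using assms by (auto simp: PiE_iff extensional_def)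
    show "?S \<subseteq> ?f ` ?S"
    proof
      fix r assume r: "r \<in> ?S"
      have m: "(\<lambda>p. r p - c p) \<in> ?S" using r assms by (auto simp: PiE_iff extensional_def)
      show "r \<in> ?f ` ?S" by (rule image_eqI[where x="\<lambda>p. r p - c p"]) (use m in auto)
    qed
  qed
  show ?thesis unfolding rand_def using map_pmf_of_set_inj[OF inj ne fin] img by simp
qed

lemma main:
  fixes A A0 :: "nat \<Rightarrow> nat \<Rightarrow> nat \<Rightarrow> 'a::{finite,field}" and b b0 :: "nat \<Rightarrow> nat \<Rightarrow> 'a"
  assumes P: "P \<subseteq> wires m n" and I: "ix n ` P \<subseteq> I" and h: "h < n" "h \<notin> I"
    and rA: "restrA m I A = restrA m I A0" and rB: "restrB m I b = restrB m I b0"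
    and X: "sbs_out m n A b r1 = sbs_out m n A0 b0 r1"
  shows "map_pmf (\<lambda>r. restrict (wval m n A b r) P) (rand m n)
       = map_pmf (\<lambda>r. restrict (wval m n A0 b0 r) P) (rand m n)"
proof -
  have XX: "xcol m n A b r j = xcol m n A0 b0 r' j" if "j < m" for j r r'
  proof -
    have "xcol m n A b r1 j = xcol m n A0 b0 r1 j"
      using X that unfolding sbs_out_def map_eq_conv by simp
    thus ?thesis using xcol_indep by metis
  qed
  have shA: "A i k j = A0 i k j" if "i \<in> I" "k < m" "j < m" for i k j
    using fun_cong[OF fun_cong[OF fun_cong[OF rA, of i], of k], of j] that by (simp add: restrA_def)
  have shB: "b i k = b0 i k" if "i \<in> I" "k < m" for i k
    using fun_cong[OF fun_cong[OF rB, of i], of k] that by (simp add: restrB_def)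
  have binI: "bin m n A b r j i k = bin m n A0 b0 r' j i k" if "i \<in> I" "j < m" "k < m" for i j k r r'
    unfolding bin_def by (rule bst_share) (use shA shB XX that in auto)
  define d where "d j i = bin m n A b (\<lambda>_. 0) j i j - bin m n A0 b0 (\<lambda>_. 0) j i j" for j i
  define c where "c p = (if p \<in> rand_dom m n then ccf n h (d (fst p)) (snd p) else 0)" for p
  have d0: "d j i = 0" if "i \<in> I" "j < m" for i j using binI[OF that that(2)] by (simp add: d_def)
  have dsum: "(\<Sum>i<n. d j i) = 0" if "j < m" for j
    using XX[OF that, of "\<lambda>_. 0" "\<lambda>_. 0"] by (simp add: d_def sum_subtractf xcol_sum)
  have binr: "bin m n A b r j i j = bin m n A0 b0 r' j i j + d j i" for r r' j i
    by (simp add: d_def bin_indep[of m n A b r j "\<lambda>_. 0"] bin_indep[of m n A0 b0 r' j "\<lambda>_. 0"])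
  have Y: "ystate m n A b (\<lambda>p. r p + c p) j s i = ystate m n A0 b0 r j s i + rstate (pairs n) (d j) (ccf n h (d j)) s i"
    if "j < m" "s \<le> npairs n" for r j s i
  proof -
    have "ystate m n A b (\<lambda>p. r p + c p) j s = rstate (pairs n) (\<lambda>i. bin m n A0 b0 r j i j + d j i) (\<lambda>s. r (j, s) + c (j, s)) s"
      unfolding ystate_def by (simp only: binr[where r'=r])
    also have "\<dots> = (\<lambda>i. ystate m n A0 b0 r j s i + rstate (pairs n) (d j) (\<lambda>s. c (j,s)) s i)"
      unfolding rstate_lin ystate_def ..
    also have "rstate (pairs n) (d j) (\<lambda>s. c (j,s)) s = rstate (pairs n) (d j) (ccf n h (d j)) s"
      by (rule rstate_cong) (use that in \<open>auto simp: c_def rand_dom_def\<close>)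
    finally show ?thesis by simp
  qed
  have key: "wval m n A b (\<lambda>p. r p + c p) w = wval m n A0 b0 r w" if w: "w \<in> P" for w r
  proof -
    have wW: "w \<in> wires m n" using w P by blast
    have iw: "ix n w \<in> I" using w I by blast
    show ?thesis
    proof (cases w)
      case (WA i k j) thus ?thesis using wW iw by (auto simp: wires_def shA)
    next
      case (WB j i k) thus ?thesis using wW iw by (auto simp: wires_def binI)
    next
      case (WR j s)
      obtain a a' where p: "pairs n ! s = (a, a')" by (cases "pairs n ! s")
      have js: "j < m" "s < npairs n" using wW WR by (auto simp: wires_def)
      have aI: "a \<in> I" using iw WR p by simp
      have "c (j, s) = 0" using js d0[OF aI js(1)] h aI p by (auto simp: c_def rand_dom_def ccf_def)
      thus ?thesis using WR by simp
    next
      case (WY j s i)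
      have js: "j < m" "s \<le> npairs n" using wW WY by (auto simp: wires_def)
      have iI: "i \<in> I" using iw WY by simp
      have "i \<noteq> h" using iI h by auto
      thus ?thesis using WY Y[OF js] hub1[of "d j" i h n s, OF d0[OF iI js(1)]] by simp
    next
      case (WS j k)
      have jk: "j < m" "k \<le> n" using wW WS by (auto simp: wires_def)
      have z: "(\<Sum>i<k. rstate (pairs n) (d j) (ccf n h (d j)) (npairs n) i) = 0"
        by (rule sum.neutral) (use hub2[OF h(1) _ dsum[OF jk(1)]] jk in auto)
      show ?thesis using WS by (simp add: Y[OF jk(1) order_refl] sum.distrib z)
    next
      case (WP j k i)
      have "j < m" "k < j" using wW WP by (auto simp: wires_def)
      thus ?thesis using WP iw shA XX by simp
    qed
  qed
  have "map_pmf (\<lambda>r. restrict (wval m n A b r) P) (rand m n)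
      = map_pmf (\<lambda>r. restrict (wval m n A b r) P) (map_pmf (\<lambda>r p. r p + c p) (rand m n))"
    by (subst shift_rand) (auto simp: c_def)
  also have "\<dots> = map_pmf (\<lambda>r. restrict (wval m n A0 b0 r) P) (rand m n)"
    unfolding pmf.map_comp o_def by (intro pmf.map_cong refl) (auto simp: restrict_def key)
  finally show ?thesis .
qed

lemma finite_wires: "finite (wires m n)"
proof -
  have "wires m n \<subseteq> (\<lambda>(i,k,j). WA i k j) ` ({..<n} \<times> {..<m} \<times> {..<m})
    \<union> (\<lambda>(j,i,k). WB j i k) ` ({..<m} \<times> {..<n} \<times> {..<m})
    \<union> (\<lambda>(j,s). WR j s) ` ({..<m} \<times> {..<npairs n})
    \<union> (\<lambda>(j,s,i). WY j s i) ` ({..<m} \<times> {..npairs n} \<times> {..<n})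
    \<union> (\<lambda>(j,k). WS j k) ` ({..<m} \<times> {..n})
    \<union> (\<lambda>(j,k,i). WP j k i) ` ({..<m} \<times> {..<m} \<times> {..<n})"
    unfolding wires_def by (auto simp: image_iff)
  thus ?thesis by (rule finite_subset) auto
qed

lemma ix_lt: "w \<in> wires m n \<Longrightarrow> 0 < n \<Longrightarrow> ix n w < n"
  by (auto simp: wires_def) (metis pairs_nth order.strict_trans)

theorem lemma6:
  fixes t m :: nat
  assumes "t \<ge> 1"
  shows "SecBackSub_NIo TYPE('a::{finite,field}) m (t + 1) t"
  unfolding SecBackSub_NIo_def
proof (intro allI impI)
  fix P assume PP: "P \<subseteq> wires m (t+1) \<and> card P \<le> t"
  hence Pw: "P \<subseteq> wires m (t+1)" and Pc: "card P \<le> t" by auto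
  have finP: "finite P" using finite_wires Pw finite_subset by blast
  define I where "I = ix (t+1) ` P"
  have cI: "card I \<le> card P" unfolding I_def using finP by (rule card_image_le)
  have In: "I \<subseteq> {..<t+1}" using Pw ix_lt unfolding I_def by fastforce
  obtain h where h: "h < t+1" "h \<notin> I"
  proof -
    have "\<not> {..<t+1} \<subseteq> I"
    proof
      assume "{..<t+1} \<subseteq> I"
      hence "card {..<t+1} \<le> card I" using In finite_subset by (intro card_mono) auto
      thus False using cI Pc by simp
    qed
    thus ?thesis using that by auto
  qed
  define SAB where "SAB = (\<lambda>(rA :: nat \<Rightarrow> nat \<Rightarrow> nat \<Rightarrow> 'a) (rB :: nat \<Rightarrow> nat \<Rightarrow> 'a) (x :: 'a list).
      SOME AB. restrA m I (fst AB) = rA \<and> restrB m I (snd AB) = rB \<and> sbs_out m (t+1) (fst AB) (snd AB) (\<lambda>_. 0) = x)"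
  define sim where "sim = (\<lambda>(rA :: nat \<Rightarrow> nat \<Rightarrow> nat \<Rightarrow> 'a) (rB :: nat \<Rightarrow> nat \<Rightarrow> 'a) (x :: 'a list).
      map_pmf (\<lambda>r. restrict (wval m (t+1) (fst (SAB rA rB x)) (snd (SAB rA rB x)) r) P) (rand m (t+1)))"
  show "\<exists>IA IB (sim :: (nat \<Rightarrow> nat \<Rightarrow> nat \<Rightarrow> 'a) \<Rightarrow> (nat \<Rightarrow> nat \<Rightarrow> 'a) \<Rightarrow> 'a list \<Rightarrow> (wire \<Rightarrow> 'a) pmf).
         IA \<subseteq> {..<t+1} \<and> IB \<subseteq> {..<t+1} \<and> card IA \<le> card P \<and> card IB \<le> card P \<and>
         (\<forall>(A :: nat \<Rightarrow> nat \<Rightarrow> nat \<Rightarrow> 'a) (b :: nat \<Rightarrow> nat \<Rightarrow> 'a).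
            map_pmf (\<lambda>r. (restrict (wval m (t+1) A b r) P, sbs_out m (t+1) A b r)) (rand m (t+1))
          = bind_pmf (map_pmf (sbs_out m (t+1) A b) (rand m (t+1)))
              (\<lambda>x. map_pmf (\<lambda>v. (v, x)) (sim (restrA m IA A) (restrB m IB b) x)))"
  proof (rule exI[of _ I], rule exI[of _ I], rule exI[of _ sim], intro conjI allI)
    show "I \<subseteq> {..<t+1}" "I \<subseteq> {..<t+1}" "card I \<le> card P" "card I \<le> card P" using In cI by auto
  next
    fix A :: "nat \<Rightarrow> nat \<Rightarrow> nat \<Rightarrow> 'a" and b :: "nat \<Rightarrow> nat \<Rightarrow> 'a"
    define x0 where "x0 = sbs_out m (t+1) A b (\<lambda>_. 0)"
    define AB where "AB = SAB (restrA m I A) (restrB m I b) x0"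
    have QAB: "restrA m I (fst AB) = restrA m I A \<and> restrB m I (snd AB) = restrB m I b \<and> sbs_out m (t+1) (fst AB) (snd AB) (\<lambda>_. 0) = x0"
      unfolding AB_def SAB_def
      by (rule someI[where x="(A,b)"]) (simp add: x0_def)
    have simeq: "sim (restrA m I A) (restrB m I b) x0 = map_pmf (\<lambda>r. restrict (wval m (t+1) (fst AB) (snd AB) r) P) (rand m (t+1))"
      unfolding sim_def AB_def by (rule refl)
    have out: "sbs_out m (t+1) A b = (\<lambda>_. x0)"
      unfolding x0_def by (rule ext) (rule sbs_out_indep)
    have M: "map_pmf (\<lambda>r. restrict (wval m (t+1) A b r) P) (rand m (t+1)) = map_pmf (\<lambda>r. restrict (wval m (t+1) (fst AB) (snd AB) r) P) (rand m (t+1))"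
    proof -
      have Q1: "restrA m I A = restrA m I (fst AB)" and Q2: "restrB m I b = restrB m I (snd AB)"
        and Q3: "sbs_out m (t+1) A b (\<lambda>_. 0) = sbs_out m (t+1) (fst AB) (snd AB) (\<lambda>_. 0)"
        using QAB by (auto simp: x0_def)
      have "ix (t+1) ` P \<subseteq> I" by (simp add: I_def)
      from main[OF Pw this h Q1 Q2 Q3] show ?thesis .
    qed
    have "map_pmf (\<lambda>r. (restrict (wval m (t+1) A b r) P, sbs_out m (t+1) A b r)) (rand m (t+1))
        = map_pmf (\<lambda>v. (v, x0)) (map_pmf (\<lambda>r. restrict (wval m (t+1) A b r) P) (rand m (t+1)))"
      using fun_cong[OF out] by (simp add: pmf.map_comp o_def)
    also have "\<dots> = map_pmf (\<lambda>v. (v, x0)) (sim (restrA m I A) (restrB m I b) x0)"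
      using M simeq by simp
    also have "\<dots> = bind_pmf (map_pmf (sbs_out m (t+1) A b) (rand m (t+1)))
              (\<lambda>x. map_pmf (\<lambda>v. (v, x)) (sim (restrA m I A) (restrB m I b) x))"
      unfolding out map_pmf_const bind_return_pmf by (rule refl)
    finally show "map_pmf (\<lambda>r. (restrict (wval m (t+1) A b r) P, sbs_out m (t+1) A b r)) (rand m (t+1))
        = bind_pmf (map_pmf (sbs_out m (t+1) A b) (rand m (t+1)))
              (\<lambda>x. map_pmf (\<lambda>v. (v, x)) (sim (restrA m I A) (restrB m I b) x))" .
  qed
qed

end
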